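(* Let $G$ be a finite group. The graph $\mathcal{P}^*(G)/\mathtt{T}$ is a tame quotient of $\mathcal{P}^*(G)$ if and only if, for all $x,y\in G\setminus\{1\}$, $x\mathtt{T}y$ implies $x\mathtt{N}y$.
   Context: The power graph $\mathcal{P}(G)$ has vertex set $G$, distinct $x,y$ adjacent iff one is a positive integer power of the other; $\mathcal{P}^*(G)$ is its subgraph induced on $G\setminus\{1\}$. $x\mathtt{N}y$ (closed twins) iff $x,y$ have the same closed neighbourhood; $x\mathtt{O}y$ (open twins) iff they have the same open neighbourhood; $x\mathtt{T}y$ (twins) iff $x\mathtt{N}y$ or $x\mathtt{O}y$ (an equivalence relation). For a graph $\Gamma$ and equivalence $\sim$ on its vertices, $\Gamma/\sim$ has vertex set the classes, classes joined iff some representatives are joined; the quotient is tame if $[x]=[y]$ implies $x$ and $y$ are joined by a path in $\Gamma$. *)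

theory Defs
  imports "HOL-Algebra.Group"
begin

definition open_nbhd :: "'a set \<Rightarrow> ('a \<Rightarrow> 'a \<Rightarrow> bool) \<Rightarrow> 'a \<Rightarrow> 'a set" where
  "open_nbhd V E x = {y \<in> V. E x y}"

definition closed_nbhd :: "'a set \<Rightarrow> ('a \<Rightarrow> 'a \<Rightarrow> bool) \<Rightarrow> 'a \<Rightarrow> 'a set" where
  "closed_nbhd V E x = insert x (open_nbhd V E x)"

definition closed_twins :: "'a set \<Rightarrow> ('a \<Rightarrow> 'a \<Rightarrow> bool) \<Rightarrow> 'a \<Rightarrow> 'a \<Rightarrow> bool" where
  "closed_twins V E x y \<longleftrightarrow> closed_nbhd V E x = closed_nbhd V E y"

definition open_twins :: "'a set \<Rightarrow> ('a \<Rightarrow> 'a \<Rightarrow> bool) \<Rightarrow> 'a \<Rightarrow> 'a \<Rightarrow> bool" where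
  "open_twins V E x y \<longleftrightarrow> open_nbhd V E x = open_nbhd V E y"

definition twins :: "'a set \<Rightarrow> ('a \<Rightarrow> 'a \<Rightarrow> bool) \<Rightarrow> 'a \<Rightarrow> 'a \<Rightarrow> bool" where
  "twins V E x y \<longleftrightarrow> closed_twins V E x y \<or> open_twins V E x y"

definition connected_by_path :: "'a set \<Rightarrow> ('a \<Rightarrow> 'a \<Rightarrow> bool) \<Rightarrow> 'a \<Rightarrow> 'a \<Rightarrow> bool" where
  "connected_by_path V E x y \<longleftrightarrow> (x, y) \<in> {(u, v). u \<in> V \<and> v \<in> V \<and> E u v}\<^sup>*"

text \<open>The quotient Gamma/R (R an equivalence on V) is tame iff
  [x] = [y] implies x and y are joined by a path in Gamma.\<close>
definition tame_quotient :: "'a set \<Rightarrow> ('a \<Rightarrow> 'a \<Rightarrow> bool) \<Rightarrow> ('a \<Rightarrow> 'a \<Rightarrow> bool) \<Rightarrow> bool" where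
  "tame_quotient V E R \<longleftrightarrow> (\<forall>x\<in>V. \<forall>y\<in>V. R x y \<longrightarrow> connected_by_path V E x y)"

definition power_adj :: "('a, 'b) monoid_scheme \<Rightarrow> 'a \<Rightarrow> 'a \<Rightarrow> bool" where
  "power_adj G x y \<longleftrightarrow> x \<noteq> y \<and>
     ((\<exists>n::nat. n \<ge> 1 \<and> y = x [^]\<^bsub>G\<^esub> n) \<or> (\<exists>n::nat. n \<ge> 1 \<and> x = y [^]\<^bsub>G\<^esub> n))"

definition pstar_vertices :: "('a, 'b) monoid_scheme \<Rightarrow> 'a set" where
  "pstar_vertices G = carrier G - {\<one>\<^bsub>G\<^esub>}"

end

theory Submission
  imports Defs "HOL-Algebra.Multiplicative_Group"
begin

lemma dvd_aux:
  fixes q a b :: nat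
  assumes "q dvd 2*a" "\<not> q dvd a" "q dvd 2*b" "\<not> q dvd b"
  shows "q dvd a + b"
proof -
  obtain k where k: "2*a = q*k" using assms(1) by blast
  obtain l where l: "2*b = q*l" using assms(3) by blast
  have "odd k"
  proof
    assume "even k" then obtain k' where "k = 2*k'" by blast
    with k have "a = q*k'" by simp
    with assms(2) show False by simp
  qed
  have "odd l"
  proof
    assume "even l" then obtain l' where "l = 2*l'" by blast
    with l have "b = q*l'" by simp
    with assms(4) show False by simp
  qed
  then obtain m where m: "k + l = 2*m" using \<open>odd k\<close>
    by (metis odd_add evenE)
  have "2*(a+b) = q*(k+l)" using k l by (simp add: algebra_simps)
  also have "\<dots> = 2*(q*m)" using m by simp
  finally have "2*(a+b) = 2*(q*m)" .
  then have "a + b = q*m" by simp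
  then show ?thesis by simp
qed

lemma inv_as_pow:
  fixes G (structure)
  assumes "group G" "finite (carrier G)" "x \<in> carrier G"
  shows "inv\<^bsub>G\<^esub> x = x [^]\<^bsub>G\<^esub> (2 * group.ord G x - 1) \<and> 2 * group.ord G x - 1 \<ge> 1"
proof -
  interpret group G by fact
  have o: "ord x \<ge> 1" using ord_ge_1 assms by blast
  have "x [^] (2 * ord x - 1) \<otimes> x = x [^] (2 * ord x - 1 + 1)"
    using assms nat_pow_mult[of x _ 1] by simp
  also have "2 * ord x - 1 + 1 = ord x * 2" using o by simp
  also have "x [^] (ord x * 2) = \<one>" using assms by (simp add: nat_pow_pow[symmetric])
  finally have "x [^] (2 * ord x - 1) \<otimes> x = \<one>" .
  then have "inv x = x [^] (2 * ord x - 1)"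
    using assms by (metis inv_equality nat_pow_closed)
  then show ?thesis using o by simp
qed

lemma adj_sym: "power_adj G x y \<Longrightarrow> power_adj G y x"
  unfolding power_adj_def by auto

lemma open_twin_self_inv:
  fixes G (structure)
  assumes G: "group G" "finite (carrier G)"
    and xV: "x \<in> pstar_vertices G" and yV: "y \<in> pstar_vertices G" and xy: "x \<noteq> y"
    and ot: "open_twins (pstar_vertices G) (power_adj G) x y"
    and nadj: "\<not> power_adj G x y"
  shows "inv\<^bsub>G\<^esub> x = x"
proof (rule ccontr)
  interpret group G by fact
  assume ne: "inv x \<noteq> x"
  have xc: "x \<in> carrier G" "x \<noteq> \<one>" using xV by (auto simp: pstar_vertices_def)
  have yc: "y \<in> carrier G" "y \<noteq> \<one>" using yV by (auto simp: pstar_vertices_def)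
  obtain n :: nat where n: "inv x = x [^] n" "n \<ge> 1" using inv_as_pow[OF G xc(1)] by blast
  have wV: "inv x \<in> pstar_vertices G" using xc by (auto simp: pstar_vertices_def)
  have "power_adj G x (inv x)" using ne n unfolding power_adj_def by auto
  then have "inv x \<in> open_nbhd (pstar_vertices G) (power_adj G) x"
    using wV by (simp add: open_nbhd_def)
  then have "inv x \<in> open_nbhd (pstar_vertices G) (power_adj G) y" using ot by (simp add: open_twins_def)
  then have "power_adj G y (inv x)" by (simp add: open_nbhd_def)
  then consider (c1) m :: nat where "m \<ge> 1" "inv x = y [^] m" | (c2) m :: nat where "m \<ge> 1" "y = inv x [^] m"
    unfolding power_adj_def by blast
  then show False
  proof cases
    case c1
    obtain k :: nat where k: "inv (y [^] m) = (y [^] m) [^] k" "k \<ge> 1"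
      using inv_as_pow[OF G, of "y [^] m"] yc by blast
    have "x = inv (inv x)" using xc by simp
    also have "\<dots> = inv (y [^] m)" using c1(2) by simp
    also have "\<dots> = (y [^] m) [^] k" using k(1) .
    also have "\<dots> = y [^] (m * k)" using yc(1) by (simp add: nat_pow_pow)
    finally have xe: "x = y [^] (m * k)" .
    have "m * k \<ge> 1" using c1 k by simp
    then have "power_adj G y x" using xy xe unfolding power_adj_def by blast
    then show False using nadj adj_sym[of G y x] by blast
  next
    case c2
    have "y = (x [^] n) [^] m" using c2(2) n(1) by simp
    also have "\<dots> = x [^] (n * m)" using xc(1) by (simp add: nat_pow_pow)
    finally have ye: "y = x [^] (n * m)" .
    have "n * m \<ge> 1" using c2 n by simp
    then have "power_adj G x y" using xy ye unfolding power_adj_def by blast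
    then show False using nadj by blast
  qed
qed

lemma unique_inv:
  fixes G (structure)
  assumes G: "group G" "finite (carrier G)"
    and z: "z \<in> carrier G"
    and x: "x = z [^]\<^bsub>G\<^esub> (a::nat)" "x \<noteq> \<one>\<^bsub>G\<^esub>" "inv\<^bsub>G\<^esub> x = x"
    and y: "y = z [^]\<^bsub>G\<^esub> (b::nat)" "y \<noteq> \<one>\<^bsub>G\<^esub>" "inv\<^bsub>G\<^esub> y = y"
  shows "x = y"
proof -
  interpret group G by fact
  have xc: "x \<in> carrier G" "y \<in> carrier G" using x y z by auto
  have "x \<otimes> x = \<one>" using xc x(3) by (metis r_inv)
  then have "z [^] (2*a) = \<one>" using x z by (simp add: nat_pow_mult[symmetric] mult_2)
  then have 1: "ord z dvd 2*a" using pow_eq_id z by blast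
  have "y \<otimes> y = \<one>" using xc y(3) by (metis r_inv)
  then have "z [^] (2*b) = \<one>" using y z by (simp add: nat_pow_mult[symmetric] mult_2)
  then have 2: "ord z dvd 2*b" using pow_eq_id z by blast
  have 3: "\<not> ord z dvd a" using x pow_eq_id z by blast
  have 4: "\<not> ord z dvd b" using y pow_eq_id z by blast
  have "ord z dvd a + b" using dvd_aux 1 2 3 4 by blast
  then have "z [^] (a + b) = \<one>" using pow_eq_id z by blast
  then have "x \<otimes> y = \<one>" using x y z by (simp add: nat_pow_mult)
  then have "y = inv x" using xc by (metis inv_equality inv_inv l_inv_ex)
  then show ?thesis using x by simp
qed

lemma selfinv_pow:
  fixes G (structure)
  assumes "group G" "x \<in> carrier G" "inv\<^bsub>G\<^esub> x = x"
  shows "x [^]\<^bsub>G\<^esub> (n::nat) = \<one>\<^bsub>G\<^esub> \<or> x [^]\<^bsub>G\<^esub> n = x"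
proof (induction n)
  case 0 then show ?case by simp
next
  case (Suc n)
  interpret group G by fact
  have xx: "x \<otimes> x = \<one>" using assms by (metis r_inv)
  from Suc show ?case using assms xx by auto
qed

lemma selfinv_adj:
  assumes "group G" "x \<in> carrier G" "inv\<^bsub>G\<^esub> x = x" "power_adj G x z" "z \<in> pstar_vertices G"
  shows "\<exists>a::nat. x = z [^]\<^bsub>G\<^esub> a"
proof -
  have "\<not> (\<exists>n::nat. z = x [^]\<^bsub>G\<^esub> n)"
  proof
    assume "\<exists>n::nat. z = x [^]\<^bsub>G\<^esub> n"
    then obtain n :: nat where "z = x [^]\<^bsub>G\<^esub> n" by blast
    moreover have "z \<noteq> x" using assms(4) unfolding power_adj_def by blast
    moreover have "z \<noteq> \<one>\<^bsub>G\<^esub>" using assms(5) unfolding pstar_vertices_def by blast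
    ultimately show False using selfinv_pow[OF assms(1-3), of n] by blast
  qed
  then show ?thesis using assms(4) unfolding power_adj_def by blast
qed

theorem mainTheorem20:
  fixes G :: "('a, 'b) monoid_scheme"
  assumes "group G" and "finite (carrier G)"
  shows "tame_quotient (pstar_vertices G) (power_adj G) (twins (pstar_vertices G) (power_adj G))
     \<longleftrightarrow> (\<forall>x\<in>pstar_vertices G. \<forall>y\<in>pstar_vertices G.
            twins (pstar_vertices G) (power_adj G) x y \<longrightarrow> closed_twins (pstar_vertices G) (power_adj G) x y)"
    (is "?L \<longleftrightarrow> ?R")
proof
  assume R: ?R
  show ?L unfolding tame_quotient_def connected_by_path_def
  proof (intro ballI impI)
    fix x y assume xV: "x \<in> pstar_vertices G" and yV: "y \<in> pstar_vertices G"
      and t: "twins (pstar_vertices G) (power_adj G) x y"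
    have ct: "closed_twins (pstar_vertices G) (power_adj G) x y" using R xV yV t by blast
    show "(x, y) \<in> {(u, v). u \<in> pstar_vertices G \<and> v \<in> pstar_vertices G \<and> power_adj G u v}\<^sup>*"
    proof (cases "x = y")
      case True then show ?thesis by simp
    next
      case False
      have "y \<in> closed_nbhd (pstar_vertices G) (power_adj G) x"
        using ct by (simp add: closed_twins_def closed_nbhd_def)
      then have "power_adj G x y" using False by (simp add: closed_nbhd_def open_nbhd_def)
      then show ?thesis using xV yV by (intro r_into_rtrancl) simp
    qed
  qed
next
  assume L: ?L
  interpret group G by fact
  show ?R
  proof (intro ballI impI)
    fix x y assume xV: "x \<in> pstar_vertices G" and yV: "y \<in> pstar_vertices G"
      and t: "twins (pstar_vertices G) (power_adj G) x y"
    show "closed_twins (pstar_vertices G) (power_adj G) x y"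
    proof (rule ccontr)
      assume nc: "\<not> ?thesis"
      then have xy: "x \<noteq> y" by (auto simp: closed_twins_def)
      have ot: "open_twins (pstar_vertices G) (power_adj G) x y" using t nc by (simp add: twins_def)
      have ot': "open_twins (pstar_vertices G) (power_adj G) y x" using ot by (simp add: open_twins_def)
      have nadj: "\<not> power_adj G x y"
      proof
        assume "power_adj G x y"
        then have "y \<in> open_nbhd (pstar_vertices G) (power_adj G) x" using yV by (simp add: open_nbhd_def)
        then have "y \<in> open_nbhd (pstar_vertices G) (power_adj G) y" using ot by (simp add: open_twins_def)
        then have "power_adj G y y" by (simp add: open_nbhd_def)
        then show False by (simp add: power_adj_def)
      qed
      have nadj': "\<not> power_adj G y x" using nadj adj_sym[of G y x] by blast
      have ix: "inv\<^bsub>G\<^esub> x = x" using open_twin_self_inv[OF assms xV yV xy ot nadj] .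
      have iy: "inv\<^bsub>G\<^esub> y = y" using open_twin_self_inv[OF assms yV xV xy[symmetric] ot' nadj'] .
      have "(x, y) \<in> {(u, v). u \<in> pstar_vertices G \<and> v \<in> pstar_vertices G \<and> power_adj G u v}\<^sup>*"
      proof -
        have "connected_by_path (pstar_vertices G) (power_adj G) x y"
          using L xV yV t unfolding tame_quotient_def by blast
        then show ?thesis unfolding connected_by_path_def .
      qed
      then obtain z where z: "z \<in> pstar_vertices G" "power_adj G x z"
      proof (cases rule: converse_rtranclE)
        case base then show ?thesis using xy by simp
      next
        case (step u)
        then show ?thesis using that by blast
      qed
      then have "z \<in> open_nbhd (pstar_vertices G) (power_adj G) x" by (simp add: open_nbhd_def)
      then have "z \<in> open_nbhd (pstar_vertices G) (power_adj G) y" using ot by (simp add: open_twins_def)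
      then have zy: "power_adj G y z" by (simp add: open_nbhd_def)
      have xc: "x \<in> carrier G" "x \<noteq> \<one>\<^bsub>G\<^esub>" using xV by (auto simp: pstar_vertices_def)
      have yc: "y \<in> carrier G" "y \<noteq> \<one>\<^bsub>G\<^esub>" using yV by (auto simp: pstar_vertices_def)
      have zc: "z \<in> carrier G" using z by (auto simp: pstar_vertices_def)
      obtain a where a: "x = z [^]\<^bsub>G\<^esub> (a::nat)" using selfinv_adj[OF assms(1) xc(1) ix z(2) z(1)] by blast
      obtain b where b: "y = z [^]\<^bsub>G\<^esub> (b::nat)" using selfinv_adj[OF assms(1) yc(1) iy zy z(1)] by blast
      have "x = y" using unique_inv[OF assms zc a xc(2) ix b yc(2) iy] .
      then show False using xy by simp
    qed
  qed
qed

end
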